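(* Let $\vec f=(f_1,\dots,f_n)$ be a profile of acknowledgement-based protocols. The following are equivalent: (i) $\vec f$ is an equilibrium; (ii) for every player $i\in[n]$: (a) $C_i^{(\vec f_{-i},g_i)}(h_0)=C_i^{(\vec f_{-i},r_i)}(h_0)=C_i^{\vec f}(h_0)$ for all $g_i,r_i\in\mathcal G_i^{\vec f}$, and (b) $C_i^{(\vec f_{-i},g_i)}(h_0)\le C_i^{(\vec f_{-i},r_i)}(h_0)$ for all $g_i\in\mathcal G_i^{\vec f}$ and all protocols $r_i\notin\mathcal G_i^{\vec f}$ of player $i$.
   Context: Contention game: $n$ players, channels $K=\{1,\dots,k\}$, slots $t=1,2,\dots$; each player has one packet, initially pending; in each slot a pending player chooses (possibly randomly) an action in $A=\{0,1,\dots,k\}$ ($0$ = idle, $a$ = transmit on channel $a$); a lone transmitter on a channel succeeds and leaves, colliding transmitters remain pending. $X_{i,t}$ is player $i$'s action at slot $t$, $h_{i,t}$ her personal history. Acknowledgement-based protocols: decision rules depend only on $h_{i,t-1}$; only transmitting players learn whether they succeeded. $T_i$ is player $i$'s latency and $C_i^{\vec g}(h_0)=\mathbb E[T_i\mid\vec g]$ her unconditional expected latency under profile $\vec g$; $(\vec f_{-i},g_i)$ is $\vec f$ with $f_i$ replaced by $g_i$. $\vec f$ is an equilibrium if for every $i$, slot $t$ and history, player $i$ cannot decrease her conditional expected latency by unilaterally deviating after $t$. For $\tau^*\ge1$ and $h_{i,\tau^*}=(a_{i,1},\dots,a_{i,\tau^*})$, $g_i(h_{i,\tau^*})$ plays $a_{i,t}$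 with probability $1$ for $1\le t\le\tau^*$ and follows $f_{i,t}$ for $t>\tau^*$. $h_{i,\tau^*}$ is consistent with $\vec f$ if it occurs for player $i$ with positive probability under $\vec f$; $\mathcal G_i^{\vec f}$ is the set of all $g_i(h_{i,\tau^*})$, $\tau^*\ge1$, with $h_{i,\tau^*}$ consistent with $\vec f$. *)

theory Defs
  imports "HOL-Probability.Probability"
begin

text \<open>
  Players are 0,...,n-1; actions are naturals, 0 = idle, a in {1..k} = transmit on channel a.
  A player's personal history is the list of her own past actions (while pending, all her
  transmissions failed).
  The global state records, for every player, her action history and whether she has succeeded.
\<close>

type_synonym protocol = "nat list \<Rightarrow> nat pmf"
type_synonym profile = "nat \<Rightarrow> protocol"
type_synonym gstate = "nat \<Rightarrow> nat list \<times> bool"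

definition is_protocol :: "nat \<Rightarrow> protocol \<Rightarrow> bool" where
  "is_protocol k f \<longleftrightarrow> (\<forall>hs. set_pmf (f hs) \<subseteq> {0..k})"

definition pending :: "gstate \<Rightarrow> nat \<Rightarrow> bool" where
  "pending s j \<longleftrightarrow> \<not> snd (s j)"

fun sample_actions :: "profile \<Rightarrow> gstate \<Rightarrow> nat \<Rightarrow> (nat \<Rightarrow> nat) pmf" where
  "sample_actions f s 0 = return_pmf (\<lambda>_. 0)"
| "sample_actions f s (Suc m) =
     bind_pmf (sample_actions f s m) (\<lambda>a.
     bind_pmf (if pending s m then f m (fst (s m)) else return_pmf 0) (\<lambda>x.
     return_pmf (a(m := x))))"

definition outcome :: "nat \<Rightarrow> gstate \<Rightarrow> (nat \<Rightarrow> nat) \<Rightarrow> gstate" where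
  "outcome n s a = (\<lambda>j. if j < n \<and> pending s j then
       (fst (s j) @ [a j],
        a j \<noteq> 0 \<and> (\<forall>l<n. l \<noteq> j \<and> pending s l \<longrightarrow> a l \<noteq> a j))
     else s j)"

definition step :: "nat \<Rightarrow> profile \<Rightarrow> gstate \<Rightarrow> gstate pmf" where
  "step n f s = map_pmf (outcome n s) (sample_actions f s n)"

definition init_state :: gstate where
  "init_state = (\<lambda>_. ([], False))"

fun run :: "nat \<Rightarrow> profile \<Rightarrow> nat \<Rightarrow> gstate pmf" where
  "run n f 0 = return_pmf init_state"
| "run n f (Suc t) = bind_pmf (run n f t) (step n f)"

text \<open>Unconditional expected latency C_i^f(h_0) = E[T_i] = sum_{t>=0} P(T_i > t),
  where T_i > t iff player i is still pending after t slots (value in [0,\<infinity>]).\<close>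
definition exp_latency :: "nat \<Rightarrow> profile \<Rightarrow> nat \<Rightarrow> ennreal" where
  "exp_latency n f i = (\<Sum>t. ennreal (measure_pmf.prob (run n f t) {s. pending s i}))"

definition hist_prob :: "nat \<Rightarrow> profile \<Rightarrow> nat \<Rightarrow> nat list \<Rightarrow> real" where
  "hist_prob n f i h = measure_pmf.prob (run n f (length h)) {s. pending s i \<and> fst (s i) = h}"

text \<open>Conditional expected latency E[T_i | player i pending with history h after |h| slots]
  = sum_t P(T_i > t | history h).\<close>
definition cond_latency :: "nat \<Rightarrow> profile \<Rightarrow> nat \<Rightarrow> nat list \<Rightarrow> ennreal" where
  "cond_latency n f i h = (\<Sum>t. if t < length h then 1 else
      ennreal (measure_pmf.prob (run n f t)
                 {s. pending s i \<and> take (length h) (fst (s i)) = h} / hist_prob n f i h))"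

definition equilibrium :: "nat \<Rightarrow> nat \<Rightarrow> profile \<Rightarrow> bool" where
  "equilibrium n k f \<longleftrightarrow>
     (\<forall>i<n. \<forall>h. hist_prob n f i h > 0 \<longrightarrow>
        (\<forall>g. is_protocol k g \<longrightarrow> (\<forall>hs. length hs < length h \<longrightarrow> g hs = f i hs) \<longrightarrow>
             cond_latency n f i h \<le> cond_latency n (f(i := g)) i h))"

definition consistent :: "nat \<Rightarrow> profile \<Rightarrow> nat \<Rightarrow> nat list \<Rightarrow> bool" where
  "consistent n f i h \<longleftrightarrow> measure_pmf.prob (run n f (length h)) {s. fst (s i) = h} > 0"

definition gdev :: "profile \<Rightarrow> nat \<Rightarrow> nat list \<Rightarrow> protocol" where
  "gdev f i h = (\<lambda>hs. if length hs < length h then return_pmf (h ! length hs) else f i hs)"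

definition Gset :: "nat \<Rightarrow> profile \<Rightarrow> nat \<Rightarrow> protocol set" where
  "Gset n f i = {gdev f i h | h. 1 \<le> length h \<and> consistent n f i h}"

end

theory Submission
  imports Defs
begin

definition act :: "profile \<Rightarrow> gstate \<Rightarrow> nat \<Rightarrow> nat pmf" where
  "act F s j = (if pending s j then F j (fst (s j)) else return_pmf 0)"

lemma sample_cong:
  "(\<forall>j<m. act F s j = act G s j) \<Longrightarrow> sample_actions F s m = sample_actions G s m"
  by (induction m) (auto simp: act_def)

lemma sample_Suc: "sample_actions F s (Suc m) =
   bind_pmf (sample_actions F s m) (\<lambda>a. bind_pmf (act F s m) (\<lambda>x. return_pmf (a(m := x))))"
  by (simp add: act_def)

declare sample_actions.simps(2)[simp del]

lemma sample_split:
  assumes "i < m" "\<forall>j. j \<noteq> i \<longrightarrow> F j = G j"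
  shows "sample_actions F s m = bind_pmf (act F s i) (\<lambda>x. map_pmf (\<lambda>a. a(i:=x)) (sample_actions G s m))"
  using assms(1)
proof (induction m)
  case 0 then show ?case by simp
next
  case (Suc m)
  show ?case
  proof (cases "i = m")
    case True
    have eq: "sample_actions F s m = sample_actions G s m"
      by (rule sample_cong) (use assms(2) True in \<open>auto simp: act_def\<close>)
    show ?thesis unfolding sample_Suc eq map_pmf_def bind_assoc_pmf bind_return_pmf True
      by (subst bind_commute_pmf) simp
  next
    case False
    then have im: "i < m" using Suc by simp
    have am: "act F s m = act G s m" using assms(2) False by (simp add: act_def)
    show ?thesis unfolding sample_Suc Suc.IH[OF im] map_pmf_def bind_assoc_pmf bind_return_pmf am
      by (simp add: fun_upd_twist[OF False])
  qed
qed

lemma sample_set: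
  "a \<in> set_pmf (sample_actions F s m) \<Longrightarrow> (\<forall>j<m. a j \<in> set_pmf (act F s j)) \<and> (\<forall>j\<ge>m. a j = 0)"
  by (induction m arbitrary: a) (auto simp: sample_Suc less_Suc_eq)


definition Qs :: "nat \<Rightarrow> profile \<Rightarrow> nat \<Rightarrow> gstate \<Rightarrow> nat \<Rightarrow> gstate pmf" where
  "Qs n F i s x = map_pmf (\<lambda>a. outcome n s (a(i:=x))) (sample_actions (F(i:= \<lambda>_. return_pmf 0)) s n)"

lemma step_split: "i < n \<Longrightarrow> step n F s = bind_pmf (act F s i) (Qs n F i s)"
  unfolding step_def Qs_def
  by (subst sample_split[of i n F "F(i:= \<lambda>_. return_pmf 0)"]) (auto simp: map_bind_pmf pmf.map_comp o_def)

lemma run_cong: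
  "(\<forall>t'<t. \<forall>s\<in>set_pmf (run n F t'). \<forall>j<n. pending s j \<longrightarrow> F j (fst (s j)) = G j (fst (s j)))
   \<Longrightarrow> run n F t = run n G t"
proof (induction t)
  case 0 then show ?case by simp
next
  case (Suc t)
  then have IH: "run n F t = run n G t" using less_SucI by blast
  show ?case unfolding run.simps IH[symmetric] step_def
    apply (rule bind_pmf_cong, simp)
    apply (rule arg_cong[where f="map_pmf _"])
    apply (rule sample_cong)
    using Suc.prems by (auto simp: act_def)
qed

definition valid :: "protocol \<Rightarrow> nat list \<Rightarrow> bool" where
  "valid p h \<longleftrightarrow> (\<forall>j<length h. h!j \<in> set_pmf (p (take j h)))"

lemma valid_snoc: "valid p (h @ [x]) \<longleftrightarrow> valid p h \<and> x \<in> set_pmf (p h)"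
  unfolding valid_def by (auto simp: nth_append less_Suc_eq)

lemma step_set:
  assumes "s' \<in> set_pmf (step n F s)" "i < n"
  shows "(pending s i \<longrightarrow> (\<exists>x\<in>set_pmf (F i (fst (s i))). fst (s' i) = fst (s i) @ [x]))
       \<and> (\<not> pending s i \<longrightarrow> s' i = s i)"
proof -
  from assms obtain a where a: "a \<in> set_pmf (sample_actions F s n)" "s' = outcome n s a"
    by (auto simp: step_def)
  from sample_set[OF a(1)] assms(2) have "a i \<in> set_pmf (act F s i)" by auto
  then show ?thesis using a(2) assms(2) by (auto simp: outcome_def act_def)
qed

lemma run_set:
  assumes "s \<in> set_pmf (run n F t)" "i < n"
  shows "length (fst (s i)) \<le> t \<and> (pending s i \<longrightarrow> length (fst (s i)) = t) \<and> valid (F i) (fst (s i))"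
  using assms(1)
proof (induction t arbitrary: s)
  case 0 then show ?case by (auto simp: init_state_def pending_def valid_def)
next
  case (Suc t)
  then obtain s0 where s0: "s0 \<in> set_pmf (run n F t)" "s \<in> set_pmf (step n F s0)" by auto
  note IH = Suc.IH[OF s0(1)]
  note st = step_set[OF s0(2) assms(2)]
  have pp: "pending s i \<Longrightarrow> pending s0 i"
    using st by (cases "pending s0 i") (auto simp: pending_def)
  show ?case
  proof (cases "pending s0 i")
    case True
    then obtain x where x: "x \<in> set_pmf (F i (fst (s0 i)))" "fst (s i) = fst (s0 i) @ [x]" using st by auto
    then show ?thesis using IH True by (auto simp: valid_snoc)
  next
    case False
    then show ?thesis using IH st pp by (auto simp: pending_def)
  qed
qed


lemma Qs_upd[simp]: "Qs n (f(i:=p)) i s = Qs n f i s"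
  unfolding Qs_def by simp

lemma step_KF:
  assumes "i < n"
  shows "step n (f(i:=p)) s = bind_pmf (p h0) (\<lambda>x. step n (f(i:=p(h0 := return_pmf x))) s)"
proof (cases "pending s i \<and> fst (s i) = h0")
  case True
  then show ?thesis unfolding step_split[OF assms] 
    by (simp add: act_def bind_return_pmf Qs_upd)
next
  case False
  then have "act (f(i:=p(h0 := return_pmf x))) s i = act (f(i:=p)) s i" for x
    by (auto simp: act_def)
  then show ?thesis unfolding step_split[OF assms] 
    by (simp add: Qs_upd)
qed

lemma mixture:
  assumes "i < n"
  shows "run n (f(i:=p)) t = bind_pmf (p h0) (\<lambda>x. run n (f(i:=p(h0 := return_pmf x))) t)"
proof (induction t)
  case 0 then show ?case by simp
next
  case (Suc t)
  show ?case
  proof (cases "t = length h0")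
    case True
    have eqr: "run n (f(i:=p(h0 := return_pmf x))) t = run n (f(i:=p)) t" for x
    proof (rule run_cong, intro allI impI ballI)
      fix t' s j assume "t' < t" "s \<in> set_pmf (run n (f(i := p(h0 := return_pmf x))) t')" "j < n" "pending s j"
      with run_set[of s n _ t' i] assms True show "(f(i := p(h0 := return_pmf x))) j (fst (s j)) = (f(i := p)) j (fst (s j))"
        by auto
    qed
    show ?thesis unfolding run.simps eqr
      by (subst bind_commute_pmf) (rule bind_pmf_cong, simp, rule step_KF[OF assms])
  next
    case False
    have "bind_pmf (run n (f(i:=p(h0 := return_pmf x))) t) (step n (f(i:=p))) =
          bind_pmf (run n (f(i:=p(h0 := return_pmf x))) t) (step n (f(i:=p(h0 := return_pmf x))))" for x
    proof (rule bind_pmf_cong, simp)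
      fix s assume s: "s \<in> set_pmf (run n (f(i := p(h0 := return_pmf x))) t)"
      have "act (f(i:=p)) s i = act (f(i:=p(h0 := return_pmf x))) s i"
        using run_set[OF s assms] False by (auto simp: act_def)
      then show "step n (f(i := p)) s = step n (f(i := p(h0 := return_pmf x))) s"
        unfolding step_split[OF assms] by (simp add: Qs_upd)
    qed
    then show ?thesis unfolding run.simps Suc.IH bind_assoc_pmf by simp
  qed
qed


definition pre :: "nat list \<Rightarrow> protocol \<Rightarrow> protocol" where
  "pre h p = (\<lambda>hs. if length hs < length h then return_pmf (h ! length hs) else p hs)"

definition L :: "protocol \<Rightarrow> nat list \<Rightarrow> real" where
  "L p h = (\<Prod>j<length h. pmf (p (take j h)) (h ! j))"

lemma pre_Nil[simp]: "pre [] p = p" by (simp add: pre_def)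

lemma L_snoc: "L p (h @ [a]) = L p h * pmf (p h) a"
  unfolding L_def
  apply (simp only: length_append_singleton prod.lessThan_Suc)
  apply (intro arg_cong2[where f="(*)"] prod.cong)
  apply (auto simp: nth_append)
  done

lemma valid_det_prefix:
  assumes "valid q hs" "\<forall>hs'. length hs' < length h \<longrightarrow> q hs' = return_pmf (h ! length hs')"
    "length h \<le> length hs"
  shows "take (length h) hs = h"
proof (rule nth_equalityI)
  show "length (take (length h) hs) = length h" using assms(3) by simp
  fix j assume "j < length (take (length h) hs)"
  then have j: "j < length h" "j < length hs" by auto
  have "hs ! j \<in> set_pmf (q (take j hs))" using assms(1) j by (auto simp: valid_def)
  also have "q (take j hs) = return_pmf (h ! j)" using assms(2) j by auto
  finally show "take (length h) hs ! j = h ! j" using j by simp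
qed

lemma pre_snoc_run:
assumes "i < n"
shows "run n (f(i:=(pre h p)(h := return_pmf a))) t = run n (f(i:=pre (h@[a]) p)) t"
proof (rule run_cong, intro allI impI ballI)
  fix t' s j assume "t' < t" and s: "s \<in> set_pmf (run n (f(i := (pre h p)(h := return_pmf a))) t')" "j < n" "pending s j"
  show "(f(i := (pre h p)(h := return_pmf a))) j (fst (s j)) = (f(i := pre (h @ [a]) p)) j (fst (s j))"
  proof (cases "j = i")
    case True
    have v: "valid ((pre h p)(h := return_pmf a)) (fst (s i))" using run_set[OF s(1) assms(1)] by simp
    consider "length (fst (s i)) < length h" | "length (fst (s i)) = length h" | "length (fst (s i)) > length h"
      by linarith
    then show ?thesis
    proof cases
      case 1 then show ?thesis using True by (auto simp: pre_def nth_append)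
    next
      case 2
      have "take (length h) (fst (s i)) = h"
        by (rule valid_det_prefix[OF v]) (use 2 in \<open>auto simp: pre_def\<close>)
      then have "fst (s i) = h" using 2 by simp
      then show ?thesis using True by (auto simp: pre_def)
    next
      case 3 then show ?thesis using True by (auto simp: pre_def)
    qed
  qed simp
qed

lemma Lik:
  assumes "i < n" "E \<subseteq> {s. pending s i \<and> take (length h) (fst (s i)) = h}"
  shows "emeasure (run n (f(i:=p)) t) E = ennreal (L p h) * emeasure (run n (f(i:=pre h p)) t) E"
  using assms(2)
proof (induction h arbitrary: E rule: rev_induct)
  case Nil then show ?case by (simp add: L_def)
next
  case (snoc a h)
  let ?r = "pre h p"
  let ?rx = "\<lambda>x. ?r(h := return_pmf x)"
  have E1: "E \<subseteq> {s. pending s i \<and> take (length h) (fst (s i)) = h}"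
  proof
    fix s assume "s \<in> E"
    with snoc.prems have p: "pending s i" and tk: "take (Suc (length h)) (fst (s i)) = h @ [a]" by auto
    have "take (length h) (fst (s i)) = take (length h) (take (Suc (length h)) (fst (s i)))" by simp
    also have "\<dots> = h" unfolding tk by simp
    finally show "s \<in> {s. pending s i \<and> take (length h) (fst (s i)) = h}" using p by simp
  qed
  have zero: "emeasure (run n (f(i:=?rx x)) t) E = 0" if "x \<noteq> a" for x
  proof -
    have "set_pmf (run n (f(i:=?rx x)) t) \<inter> E = {}"
    proof (rule ccontr)
      assume "\<not> ?thesis"
      then obtain s where s: "s \<in> set_pmf (run n (f(i:=?rx x)) t)" "s \<in> E" by auto
      from run_set[OF s(1) assms(1)] have v: "valid (?rx x) (fst (s i))" by simp
      from s(2) snoc.prems have tk: "take (Suc (length h)) (fst (s i)) = h @ [a]" by auto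
      have "length (take (Suc (length h)) (fst (s i))) = Suc (length h)" using tk by simp
      then have len: "length h < length (fst (s i))" by simp
      have "take (length h) (fst (s i)) = take (length h) (take (Suc (length h)) (fst (s i)))" by simp
      then have tk2: "take (length h) (fst (s i)) = h" unfolding tk by simp
      have "fst (s i) ! length h \<in> set_pmf (?rx x (take (length h) (fst (s i))))"
        using v len by (auto simp: valid_def)
      then have "fst (s i) ! length h = x" using tk2 by simp
      moreover have "fst (s i) ! length h = take (Suc (length h)) (fst (s i)) ! length h" by simp
      then have "fst (s i) ! length h = a" unfolding tk by simp
      ultimately show False using that by simp
    qed
    then show ?thesis by (simp add: measure_pmf.emeasure_eq_measure measure_pmf_zero_iff)
  qed
  have eqa: "run n (f(i:=?rx a)) t = run n (f(i:=pre (h@[a]) p)) t"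
    by (rule pre_snoc_run[OF assms(1)])
  have "emeasure (run n (f(i:=?r)) t) E = \<integral>\<^sup>+x. emeasure (run n (f(i:=?rx x)) t) E \<partial>(p h)"
    by (subst mixture[OF assms(1), of f ?r t h]) (simp add: pre_def)
  also have "\<dots> = \<integral>\<^sup>+x. emeasure (run n (f(i:=?rx a)) t) E * indicator {a} x \<partial>(p h)"
  proof (rule nn_integral_cong)
    fix x show "emeasure (run n (f(i:=?rx x)) t) E = emeasure (run n (f(i:=?rx a)) t) E * indicator {a} x"
      by (cases "x = a") (simp_all add: zero)
  qed
  also have "\<dots> = emeasure (run n (f(i:=?rx a)) t) E * ennreal (pmf (p h) a)"
    by (simp add: emeasure_pmf_single)
  finally have "emeasure (run n (f(i:=?r)) t) E = ennreal (pmf (p h) a) * emeasure (run n (f(i:=pre (h@[a]) p)) t) E"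
    using eqa by (simp add: mult.commute)
  moreover have "L p h \<ge> 0" unfolding L_def by (simp add: prod_nonneg)
  ultimately show ?case unfolding snoc.IH[OF E1] L_snoc
    by (simp only: ennreal_mult pmf_nonneg mult.assoc)
qed


lemma exp_em: "exp_latency n F i = (\<Sum>t. emeasure (run n F t) {s. pending s i})"
  by (simp add: exp_latency_def measure_pmf.emeasure_eq_measure)

lemma exp_mix:
  assumes "i < n"
  shows "exp_latency n (f(i:=pre h p)) i = (\<integral>\<^sup>+x. exp_latency n (f(i:=pre (h@[x]) p)) i \<partial>(p h))"
proof -
  have "emeasure (run n (f(i:=pre h p)) t) X = (\<integral>\<^sup>+x. emeasure (run n (f(i:=pre (h@[x]) p)) t) X \<partial>(p h))" for t X
  proof -
    have "pre h p h = p h" by (simp add: pre_def)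
    then show ?thesis by (subst mixture[OF assms, of f "pre h p" t h]) (simp add: pre_snoc_run[OF assms])
  qed
  then show ?thesis unfolding exp_em
    by (simp add: nn_integral_suminf)
qed

lemma pre_protocol: "is_protocol k p \<Longrightarrow> valid p h \<Longrightarrow> is_protocol k (pre h p)"
  unfolding is_protocol_def pre_def valid_def by (auto simp: subset_iff)

lemma eq_exp:
  assumes "i < n" "is_protocol k (f i)"
    "\<forall>r. is_protocol k r \<longrightarrow> exp_latency n f i \<le> exp_latency n (f(i:=r)) i"
    "valid (f i) h"
  shows "exp_latency n (f(i:=pre h (f i))) i = exp_latency n f i"
  using assms(4)
proof (induction h rule: rev_induct)
  case Nil then show ?case by simp
next
  case (snoc a h)
  let ?e = "exp_latency n f i"
  let ?ex = "\<lambda>x. exp_latency n (f(i:=pre (h@[x]) (f i))) i"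
  have vh: "valid (f i) h" and a: "a \<in> set_pmf (f i h)" using snoc.prems by (auto simp: valid_snoc)
  have mix: "?e = (\<integral>\<^sup>+x. ?ex x \<partial>(f i h))"
    unfolding snoc.IH[OF vh, symmetric] by (rule exp_mix[OF assms(1)])
  have ge: "?e \<le> ?ex x" if "x \<in> set_pmf (f i h)" for x
    using assms(3) pre_protocol[OF assms(2), of "h@[x]"] vh that by (simp add: valid_snoc)
  show ?case
  proof (rule ccontr)
    assume ne: "?ex a \<noteq> ?e"
    then have lt: "?e < ?ex a" using ge[OF a] by simp
    then have fin: "?e \<noteq> \<top>" using top_greatest not_le by fastforce
    have "(\<integral>\<^sup>+x. ?e + (?ex a - ?e) * indicator {a} x \<partial>(f i h)) \<le> (\<integral>\<^sup>+x. ?ex x \<partial>(f i h))"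
    proof (rule nn_integral_mono_AE)
      show "AE x in measure_pmf (f i h). ?e + (?ex a - ?e) * indicator {a} x \<le> ?ex x"
        unfolding AE_measure_pmf_iff
      proof
        fix x assume x: "x \<in> set_pmf (f i h)"
        show "?e + (?ex a - ?e) * indicator {a} x \<le> ?ex x"
        proof (cases "x = a")
          case True then show ?thesis using lt by (simp add: add_diff_inverse_ennreal less_imp_le)
        next
          case False then show ?thesis using ge[OF x] by simp
        qed
      qed
    qed
    also have "\<dots> = ?e" using mix by simp
    finally have "?e + (?ex a - ?e) * ennreal (pmf (f i h) a) \<le> ?e + 0"
      by (simp add: nn_integral_add measure_pmf.emeasure_space_1 emeasure_pmf_single)
    then have "(?ex a - ?e) * ennreal (pmf (f i h) a) = 0"
      using fin by (simp add: ennreal_add_left_cancel_le)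
    moreover have "pmf (f i h) a > 0" using a by (simp add: pmf_positive)
    ultimately have "?ex a - ?e = 0" by simp
    then have "?ex a \<le> ?e" using lt by (simp add: diff_eq_0_iff_ennreal)
    then show False using lt by simp
  qed
qed


lemma Lik_real:
  assumes "i < n" "E \<subseteq> {s. pending s i \<and> take (length h) (fst (s i)) = h}"
  shows "measure_pmf.prob (run n (f(i:=p)) t) E = L p h * measure_pmf.prob (run n (f(i:=pre h p)) t) E"
proof -
  have "L p h \<ge> 0" unfolding L_def by (simp add: prod_nonneg)
  then show ?thesis using Lik[OF assms, of f p t]
    by (simp add: measure_pmf.emeasure_eq_measure ennreal_mult[symmetric] del: ennreal_mult')
qed

definition Pd :: "nat \<Rightarrow> profile \<Rightarrow> nat \<Rightarrow> nat list \<Rightarrow> real" where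
  "Pd n f i h = measure_pmf.prob (run n (f(i:=pre h (f i))) (length h)) {s. pending s i \<and> fst (s i) = h}"

definition Aof :: "nat \<Rightarrow> profile \<Rightarrow> nat \<Rightarrow> nat list \<Rightarrow> ennreal" where
  "Aof n f i h = (\<Sum>t<length h. ennreal (measure_pmf.prob (run n (f(i:=pre h (f i))) t) {s. pending s i}))"

definition Xof :: "nat \<Rightarrow> profile \<Rightarrow> nat \<Rightarrow> nat list \<Rightarrow> protocol \<Rightarrow> ennreal" where
  "Xof n f i h r = (\<Sum>t. ennreal (measure_pmf.prob (run n (f(i:=r)) (t + length h)) {s. pending s i} / Pd n f i h))"

lemma Dec:
  assumes i: "i < n" and H: "hist_prob n f i h > 0"
    and agree: "\<forall>hs. length hs < length h \<longrightarrow> g hs = f i hs"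
  shows "cond_latency n (f(i:=g)) i h = of_nat (length h) + Xof n f i h (pre h g)"
    "exp_latency n (f(i:=pre h g)) i = Aof n f i h + ennreal (Pd n f i h) * Xof n f i h (pre h g)"
    "Pd n f i h > 0"
proof -
  let ?Eh = "{s. pending s i \<and> take (length h) (fst (s i)) = h}"
  let ?H = "hist_prob n f i h"
  have h1: "hist_prob n (f(i:=g)) i h = ?H"
    unfolding hist_prob_def
  proof (rule arg_cong[where f="\<lambda>M. measure_pmf.prob M _"], rule run_cong, intro allI impI ballI)
    fix t' s j assume "t' < length h" "s \<in> set_pmf (run n (f(i := g)) t')" "j < n" "pending s j"
    then show "(f(i := g)) j (fst (s j)) = f j (fst (s j))"
      using run_set[of s n "f(i:=g)" t' i] i agree by (cases "j = i") auto
  qed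
  have h2: "L g h = L (f i) h" unfolding L_def using agree by (intro prod.cong) auto
  have sub: "{s. pending s i \<and> fst (s i) = h} \<subseteq> ?Eh" by auto
  have h4: "?H = L (f i) h * Pd n f i h"
    unfolding hist_prob_def Pd_def using Lik_real[OF i sub, of f "f i" "length h"]
    by simp
  have Lpos: "L (f i) h > 0"
  proof -
    have "L (f i) h \<ge> 0" unfolding L_def by (simp add: prod_nonneg)
    moreover have "L (f i) h \<noteq> 0" using H h4 by auto
    ultimately show ?thesis by simp
  qed
  have Pdnn: "Pd n f i h \<ge> 0" unfolding Pd_def by simp
  show Pdpos: "Pd n f i h > 0" using H h4 Lpos Pdnn
    by (simp add: zero_less_mult_iff)
  have h5: "measure_pmf.prob (run n (f(i:=pre h g)) t) {s. pending s i} =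
            measure_pmf.prob (run n (f(i:=pre h g)) t) ?Eh" if t: "t \<ge> length h" for t
  proof -
    have "{s. pending s i} \<inter> set_pmf (run n (f(i:=pre h g)) t) = ?Eh \<inter> set_pmf (run n (f(i:=pre h g)) t)"
    proof (intro equalityI subsetI)
      fix s assume s: "s \<in> {s. pending s i} \<inter> set_pmf (run n (f(i:=pre h g)) t)"
      then have "valid (pre h g) (fst (s i))" "length (fst (s i)) = t" using run_set[of s n "f(i:=pre h g)" t i] i by auto
      then have "take (length h) (fst (s i)) = h"
        using t by (intro valid_det_prefix) (auto simp: pre_def)
      then show "s \<in> ?Eh \<inter> set_pmf (run n (f(i:=pre h g)) t)" using s by auto
    qed auto
    note X = this
    have "measure_pmf.prob (run n (f(i:=pre h g)) t) {s. pending s i} = 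
      measure_pmf.prob (run n (f(i:=pre h g)) t) ({s. pending s i} \<inter> set_pmf (run n (f(i:=pre h g)) t))"
      by (rule measure_Int_set_pmf[symmetric])
    also have "\<dots> = measure_pmf.prob (run n (f(i:=pre h g)) t) (?Eh \<inter> set_pmf (run n (f(i:=pre h g)) t))"
      by (simp only: X)
    also have "\<dots> = measure_pmf.prob (run n (f(i:=pre h g)) t) ?Eh"
      by (rule measure_Int_set_pmf)
    finally show ?thesis .
  qed
  have h6: "run n (f(i:=pre h g)) t = run n (f(i:=pre h (f i))) t" if "t < length h" for t
  proof (rule run_cong, intro allI impI ballI)
    fix t' s j assume "t' < t" "s \<in> set_pmf (run n (f(i := pre h g)) t')" "j < n" "pending s j"
    then show "(f(i := pre h g)) j (fst (s j)) = (f(i := pre h (f i))) j (fst (s j))"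
      using run_set[of s n "f(i:=pre h g)" t' i] i that by (cases "j = i") (auto simp: pre_def)
  qed
  have h7: "measure_pmf.prob (run n (f(i:=g)) t) ?Eh / hist_prob n (f(i:=g)) i h =
     measure_pmf.prob (run n (f(i:=pre h g)) t) {s. pending s i} / Pd n f i h" if "t \<ge> length h" for t
  proof -
    have "measure_pmf.prob (run n (f(i:=g)) t) ?Eh = L (f i) h * measure_pmf.prob (run n (f(i:=pre h g)) t) {s. pending s i}"
      using Lik_real[OF i order.refl, of f g t] h2 h5[OF that] by simp
    then show ?thesis unfolding h1 h4 using Lpos by simp
  qed
  show "cond_latency n (f(i:=g)) i h = of_nat (length h) + Xof n f i h (pre h g)"
  proof -
    let ?c = "\<lambda>t. if t < length h then 1 else
      ennreal (measure_pmf.prob (run n (f(i:=g)) t) ?Eh / hist_prob n (f(i:=g)) i h)"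
    have "cond_latency n (f(i:=g)) i h = suminf ?c" unfolding cond_latency_def by simp
    also have "\<dots> = (\<Sum>j. ?c (j + length h)) + (\<Sum>j<length h. ?c j)"
      by (rule suminf_offset) simp
    also have "(\<Sum>j. ?c (j + length h)) = Xof n f i h (pre h g)"
      unfolding Xof_def by (rule suminf_cong) (simp add: h7)
    also have "(\<Sum>j<length h. ?c j) = of_nat (length h)" by simp
    finally show ?thesis by (metis add.commute)
  qed
  have eP: "ennreal (measure_pmf.prob (run n (f(i:=pre h g)) (t + length h)) {s. pending s i}) =
     ennreal (Pd n f i h) * ennreal (measure_pmf.prob (run n (f(i:=pre h g)) (t + length h)) {s. pending s i} / Pd n f i h)" for t
    using Pdpos by (simp add: ennreal_mult[symmetric] del: ennreal_mult')
  show "exp_latency n (f(i:=pre h g)) i = Aof n f i h + ennreal (Pd n f i h) * Xof n f i h (pre h g)"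
  proof -
    let ?c = "\<lambda>t. ennreal (measure_pmf.prob (run n (f(i:=pre h g)) t) {s. pending s i})"
    have "exp_latency n (f(i:=pre h g)) i = suminf ?c" unfolding exp_latency_def by simp
    also have "\<dots> = (\<Sum>j. ?c (j + length h)) + (\<Sum>j<length h. ?c j)"
      by (rule suminf_offset) simp
    also have "(\<Sum>j. ?c (j + length h)) = ennreal (Pd n f i h) * Xof n f i h (pre h g)"
      unfolding Xof_def eP by (rule ennreal_suminf_cmult)
    also have "(\<Sum>j<length h. ?c j) = Aof n f i h" unfolding Aof_def
      by (rule sum.cong) (simp_all add: h6)
    finally show ?thesis by (metis add.commute)
  qed
qed


lemma hist0: "hist_prob n F i [] = 1"
  by (simp add: hist_prob_def init_state_def pending_def)

lemma cond0: "cond_latency n F i [] = exp_latency n F i"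
  by (simp add: cond_latency_def hist0 exp_latency_def)

lemma gdev_pre: "gdev f i h = pre h (f i)"
  by (simp add: gdev_def pre_def)

lemma pos_valid:
  assumes "i < n" "measure_pmf.prob (run n F t) {s. fst (s i) = h} > 0"
  shows "valid (F i) h"
proof -
  from assms(2) obtain s where "s \<in> set_pmf (run n F t)" "fst (s i) = h"
    using measure_pmf_zero_iff[of "run n F t" "{s. fst (s i) = h}"] by fastforce
  then show ?thesis using run_set[of s n F t i] assms(1) by auto
qed

lemma hist_consistent: "hist_prob n f i h > 0 \<Longrightarrow> consistent n f i h"
  unfolding hist_prob_def consistent_def
  by (rule less_le_trans, assumption, rule measure_pmf.finite_measure_mono) auto

lemma consistent1:
  assumes i: "i < n" and a: "a \<in> set_pmf (f i [])"
  shows "consistent n f i [a]"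
proof -
  let ?G = "f(i := \<lambda>_. return_pmf 0)"
  obtain b where b: "b \<in> set_pmf (sample_actions ?G init_state n)"
    using set_pmf_not_empty[of "sample_actions ?G init_state n"] by blast
  have "b(i := a) \<in> set_pmf (sample_actions f init_state n)"
    using a b by (subst sample_split[OF i, of f ?G]) (auto simp: act_def init_state_def pending_def)
  then have "outcome n init_state (b(i := a)) \<in> set_pmf (run n f 1)"
    by (simp add: step_def)
  moreover have "fst (outcome n init_state (b(i := a)) i) = [a]"
    using i by (simp add: outcome_def init_state_def pending_def)
  ultimately show ?thesis unfolding consistent_def
    using measure_pmf_posI[of "outcome n init_state (b(i := a))" "run n f 1" "{s. fst (s i) = [a]}"]
    by (simp del: run.simps)
qed


lemma equil_E0:
  assumes "equilibrium n k f" "i < n" "is_protocol k r"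
  shows "exp_latency n f i \<le> exp_latency n (f(i:=r)) i"
  using assms unfolding equilibrium_def
  by (metis hist0 cond0 less_numeral_extra(1) list.size(3) not_less0)

theorem lemma2:
  fixes n k :: nat and f :: profile
  assumes "\<forall>i<n. is_protocol k (f i)"
  shows "equilibrium n k f \<longleftrightarrow>
    (\<forall>i<n.
       (\<forall>g\<in>Gset n f i. \<forall>r\<in>Gset n f i.
          exp_latency n (f(i := g)) i = exp_latency n (f(i := r)) i \<and>
          exp_latency n (f(i := r)) i = exp_latency n f i) \<and>
       (\<forall>g\<in>Gset n f i. \<forall>r. is_protocol k r \<longrightarrow> r \<notin> Gset n f i \<longrightarrow>
          exp_latency n (f(i := g)) i \<le> exp_latency n (f(i := r)) i))"
  (is "?L \<longleftrightarrow> ?R")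
proof
  assume eq: ?L
  show ?R
  proof (intro allI impI conjI ballI)
    fix i assume i: "i < n"
    have G: "exp_latency n (f(i := g)) i = exp_latency n f i" if "g \<in> Gset n f i" for g
    proof -
      from that obtain h where h: "g = gdev f i h" "consistent n f i h" by (auto simp: Gset_def)
      have "valid (f i) h" using pos_valid[of i n f "length h" h] i h(2) by (auto simp: consistent_def)
      then show ?thesis unfolding h(1) gdev_pre
        using eq_exp[of i n k f h] i assms equil_E0[OF eq i] by blast
    qed
    fix g r
    show "g \<in> Gset n f i \<Longrightarrow> r \<in> Gset n f i \<Longrightarrow> exp_latency n (f(i := g)) i = exp_latency n (f(i := r)) i"
      using G by simp
    show "g \<in> Gset n f i \<Longrightarrow> r \<in> Gset n f i \<Longrightarrow> exp_latency n (f(i := r)) i = exp_latency n f i"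
      using G by simp
    show "g \<in> Gset n f i \<Longrightarrow> is_protocol k r \<Longrightarrow> r \<notin> Gset n f i \<Longrightarrow>
          exp_latency n (f(i := g)) i \<le> exp_latency n (f(i := r)) i"
      using G equil_E0[OF eq i] by simp
  qed
next
  assume R: ?R
  show ?L unfolding equilibrium_def
  proof (intro allI impI)
    fix i h g
    assume i: "i < n" and H: "hist_prob n f i h > 0" and gp: "is_protocol k g"
      and agree: "\<forall>hs. length hs < length h \<longrightarrow> g hs = f i hs"
    have Ra: "\<And>g r. g \<in> Gset n f i \<Longrightarrow> r \<in> Gset n f i \<Longrightarrow> exp_latency n (f(i := r)) i = exp_latency n f i"
      using R i by blast
    have Rb: "\<And>g r. g \<in> Gset n f i \<Longrightarrow> is_protocol k r \<Longrightarrow> r \<notin> Gset n f i \<Longrightarrow>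
          exp_latency n (f(i := g)) i \<le> exp_latency n (f(i := r)) i"
      using R i by blast
    obtain a where a: "a \<in> set_pmf (f i [])" using set_pmf_not_empty[of "f i []"] by blast
    have g1: "gdev f i [a] \<in> Gset n f i" using consistent1[of i n a f] i a by (auto simp: Gset_def)
    have E0: "exp_latency n f i \<le> exp_latency n (f(i:=r)) i" if "is_protocol k r" for r
    proof (cases "r \<in> Gset n f i")
      case True then show ?thesis using Ra[OF g1] by simp
    next
      case False then show ?thesis using Rb[OF g1 that] Ra[OF g1 g1] by simp
    qed
    have eh: "exp_latency n (f(i:=pre h (f i))) i = exp_latency n f i"
    proof (cases "h = []")
      case True then show ?thesis by simp
    next
      case False
      then have "gdev f i h \<in> Gset n f i" using hist_consistent[OF H]
        by (auto simp: Gset_def Suc_le_eq)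
      then show ?thesis using Ra[OF g1] by (simp add: gdev_pre)
    qed
    have vh: "valid (f i) h" using pos_valid[of i n f "length h" h] i hist_consistent[OF H]
      unfolding consistent_def by blast
    have "valid g h" using vh agree unfolding valid_def by auto
    then have pp: "is_protocol k (pre h g)" by (rule pre_protocol[OF gp])
    have le: "exp_latency n (f(i:=pre h (f i))) i \<le> exp_latency n (f(i:=pre h g)) i"
      using eh E0[OF pp] by simp
    note D1 = Dec[of i n f h g, OF i H agree]
    have D2: "cond_latency n f i h = of_nat (length h) + Xof n f i h (pre h (f i))"
      "exp_latency n (f(i:=pre h (f i))) i = Aof n f i h + ennreal (Pd n f i h) * Xof n f i h (pre h (f i))"
      using Dec[of i n f h "f i", OF i H] by simp_all
    have Afin: "Aof n f i h \<noteq> \<top>" unfolding Aof_def by (simp add: ennreal_sum_eq_top)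
    have "Xof n f i h (pre h (f i)) \<le> Xof n f i h (pre h g)"
      using le unfolding D1(2) D2(2)
      using Afin D1(3) by (simp add: ennreal_add_left_cancel_le ennreal_mult_le_mult_iff)
    then show "cond_latency n f i h \<le> cond_latency n (f(i := g)) i h"
      unfolding D1(1) D2(1) by (simp add: add_left_mono)
  qed
qed

end
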